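(* Let $H$ be a digraph with at least two vertices and $r\in V(H)$ such that every vertex of $H$ is reachable from $r$, and let $(\hat T,\{B_x\}_{x\in V(\hat T)})$ be the $r$-rooted cut decomposition of $H$. For every vertex $u\in V(H)$ and every set $X\subseteq V(H)\setminus(V(\hat T)\cup\{u\})$ there exists a directed path $P$ from $r$ to $u$ in $H$ with $|V(P)\cap X|\le |X|/2$.
   Context: Digraphs are finite and without loops; paths are directed. A vertex $v$ is bi-reachable from $r$ if there are two internally vertex-disjoint directed paths from $r$ to $v$. For a digraph $H$ with at least two vertices and $r\in V(H)$ such that every vertex of $H$ is reachable from $r$, the diblock $B_r$ of $r$ in $H$ is the set of all vertices bi-reachable from $r$, together with $r$ and all out-neighbours of $r$. For $x\in B_r\setminus\{r\}$ let $X_x$ be the set of vertices $v\in V(H)\setminus B_r$ such that every directed $r$–$v$ path intersects $B_r$ for the last time in $x$; $x$ is a bottleneck of $B_r$ if $X_x\ne\emptyset$ (the sets $X_x$ partition $V(H)\setminus B_r$). The $r$-rooted cut decomposition $(\hat T,\{B_x\}_{x\in V(\hat T)})$ of $H$ is defined recursively: $\hat T$ is a rooted tree with root $r$ and $V(\hat T)\subseteq V(H)$; the set associated with the root is $B_r$; the children of $r$ are the bottlenecks of $B_r$; and for each bottleneck $x$, the subtree of $\hat T$ rooted at $x$ together with its associated sets is the $x$-rooted cut decomposition of the induced subgraph $H[X_x\cup\{x\}]$. *)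

theory Defs
  imports Complex_Main
begin

text \<open>A digraph is given by a vertex set V and an edge relation E.
  Paths in the induced subgraph H[S] are nonempty lists of distinct vertices
  of S with consecutive vertices joined by edges of E.\<close>

definition dpath :: "'a set \<Rightarrow> ('a \<Rightarrow> 'a \<Rightarrow> bool) \<Rightarrow> 'a list \<Rightarrow> bool" where
  "dpath S E p \<longleftrightarrow> p \<noteq> [] \<and> distinct p \<and> set p \<subseteq> S \<and>
     (\<forall>i. Suc i < length p \<longrightarrow> E (p ! i) (p ! Suc i))"

definition dpath_from_to :: "'a set \<Rightarrow> ('a \<Rightarrow> 'a \<Rightarrow> bool) \<Rightarrow> 'a \<Rightarrow> 'a \<Rightarrow> 'a list \<Rightarrow> bool" where
  "dpath_from_to S E a b p \<longleftrightarrow> dpath S E p \<and> hd p = a \<and> last p = b"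

definition reachable :: "'a set \<Rightarrow> ('a \<Rightarrow> 'a \<Rightarrow> bool) \<Rightarrow> 'a \<Rightarrow> 'a \<Rightarrow> bool" where
  "reachable S E a b \<longleftrightarrow> (\<exists>p. dpath_from_to S E a b p)"

definition internal_vertices :: "'a list \<Rightarrow> 'a set" where
  "internal_vertices p = set p - {hd p, last p}"

definition bireachable :: "'a set \<Rightarrow> ('a \<Rightarrow> 'a \<Rightarrow> bool) \<Rightarrow> 'a \<Rightarrow> 'a \<Rightarrow> bool" where
  "bireachable S E r v \<longleftrightarrow> (\<exists>p q. p \<noteq> q \<and> dpath_from_to S E r v p \<and> dpath_from_to S E r v q \<and>
       internal_vertices p \<inter> internal_vertices q = {})"

definition diblock :: "'a set \<Rightarrow> ('a \<Rightarrow> 'a \<Rightarrow> bool) \<Rightarrow> 'a \<Rightarrow> 'a set" where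
  "diblock S E r = {v \<in> S. bireachable S E r v} \<union> {r} \<union> {v \<in> S. E r v}"

definition Xset :: "'a set \<Rightarrow> ('a \<Rightarrow> 'a \<Rightarrow> bool) \<Rightarrow> 'a \<Rightarrow> 'a \<Rightarrow> 'a set" where
  "Xset S E r x = {v \<in> S - diblock S E r. \<forall>p. dpath_from_to S E r v p \<longrightarrow>
       last (filter (\<lambda>w. w \<in> diblock S E r) p) = x}"

definition bottleneck :: "'a set \<Rightarrow> ('a \<Rightarrow> 'a \<Rightarrow> bool) \<Rightarrow> 'a \<Rightarrow> 'a \<Rightarrow> bool" where
  "bottleneck S E r x \<longleftrightarrow> x \<in> diblock S E r - {r} \<and> Xset S E r x \<noteq> {}"

text \<open>cut_tree_node E S r v: v is a node of the tree of the r-rooted cut decomposition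
  of H[S].\<close>
inductive cut_tree_node :: "('a \<Rightarrow> 'a \<Rightarrow> bool) \<Rightarrow> 'a set \<Rightarrow> 'a \<Rightarrow> 'a \<Rightarrow> bool" for E where
  root: "cut_tree_node E S r r"
| sub: "bottleneck S E r x \<Longrightarrow> cut_tree_node E (Xset S E r x \<union> {x}) x v \<Longrightarrow> cut_tree_node E S r v"

end

theory Submission
  imports Defs
begin

lemma walk_to_path:
  "w \<noteq> [] \<Longrightarrow> successively R w \<Longrightarrow> \<exists>p. p \<noteq> [] \<and> distinct p \<and> successively R p \<and> set p \<subseteq> set w \<and> hd p = hd w \<and> last p = last w"
proof (induction "length w" arbitrary: w rule: less_induct)
  case less
  show ?case
  proof (cases "distinct w")
    case True then show ?thesis using less.prems by blast
  next
    case False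
    then obtain xs ys zs y where w: "w = xs @ [y] @ ys @ [y] @ zs" using not_distinct_decomp by blast
    define w' where "w' = xs @ [y] @ zs"
    have len: "length w' < length w" using w w'_def by simp
    have s: "successively R w'"
      using less.prems(2) unfolding w w'_def
      by (auto simp: successively_append_iff successively_Cons split: if_splits)
    have "w' \<noteq> []" by (simp add: w'_def)
    from less.hyps[OF len this s] obtain p where p: "p \<noteq> [] \<and> distinct p \<and> successively R p \<and> set p \<subseteq> set w' \<and> hd p = hd w' \<and> last p = last w'" by blast
    have "set w' \<subseteq> set w" "hd w' = hd w" "last w' = last w"
      unfolding w w'_def by (auto simp: hd_append)
    with p show ?thesis by auto
  qed
qed

definition abpath :: "('a \<Rightarrow> 'a \<Rightarrow> bool) \<Rightarrow> 'a set \<Rightarrow> 'a set \<Rightarrow> 'a list \<Rightarrow> bool" where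
  "abpath R A B p \<longleftrightarrow> p \<noteq> [] \<and> distinct p \<and> successively R p \<and> hd p \<in> A \<and> last p \<in> B"

lemma trunc_first:
  assumes "abpath R A B p" "\<exists>z\<in>set p. z \<in> T"
  shows "\<exists>p'. abpath R A T p' \<and> set p' \<subseteq> set p \<and> (\<forall>a\<in>set (butlast p'). a \<notin> T)"
proof -
  obtain ys z zs where p: "p = ys @ z # zs" "z \<in> T" "\<forall>a\<in>set ys. a \<notin> T"
    using split_list_first_prop[OF assms(2)] by blast
  have "abpath R A T (ys @ [z])"
    using assms(1) p unfolding abpath_def
    by (auto simp: successively_append_iff hd_append split: if_splits)
  then show ?thesis using p by auto
qed

lemma trunc_last:
  assumes "abpath R A B p" "\<exists>z\<in>set p. z \<in> T"
  shows "\<exists>p'. abpath R T B p' \<and> set p' \<subseteq> set p \<and> (\<forall>a\<in>set (tl p'). a \<notin> T)"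
proof -
  obtain ys z zs where p: "p = ys @ z # zs" "z \<in> T" "\<forall>a\<in>set zs. a \<notin> T"
    using split_list_last_prop[OF assms(2)] by blast
  have "abpath R T B (z # zs)"
    using assms(1) p unfolding abpath_def
    by (auto simp: successively_append_iff successively_Cons split: if_splits)
  then show ?thesis using p by auto
qed

lemma drop_edge_first:
  "successively (\<lambda>a b. (a,b) \<in> insert (x,y) F) p \<Longrightarrow> \<forall>a\<in>set (butlast p). a \<noteq> x \<Longrightarrow> successively (\<lambda>a b. (a,b) \<in> F) p"
  unfolding successively_conv_nth
proof (intro allI impI)
  fix i assume a: "\<forall>i. Suc i < length p \<longrightarrow> (p ! i, p ! Suc i) \<in> insert (x, y) F" "\<forall>a\<in>set (butlast p). a \<noteq> x" "Suc i < length p"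
  have "p ! i \<in> set (butlast p)" using a(3) by (metis Suc_lessE diff_Suc_1 length_butlast nth_butlast nth_mem)
  then show "(p ! i, p ! Suc i) \<in> F" using a by auto
qed

lemma drop_edge_last:
  "successively (\<lambda>a b. (a,b) \<in> insert (x,y) F) p \<Longrightarrow> \<forall>a\<in>set (tl p). a \<noteq> y \<Longrightarrow> successively (\<lambda>a b. (a,b) \<in> F) p"
  unfolding successively_conv_nth
proof (intro allI impI)
  fix i assume a: "\<forall>i. Suc i < length p \<longrightarrow> (p ! i, p ! Suc i) \<in> insert (x, y) F" "\<forall>a\<in>set (tl p). a \<noteq> y" "Suc i < length p"
  have "p ! Suc i \<in> set (tl p)" using a(3) by (metis Suc_lessE diff_Suc_1 length_tl nth_mem nth_tl)
  then show "(p ! i, p ! Suc i) \<in> F" using a by auto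
qed

lemma abpath_mono: "abpath R A B p \<Longrightarrow> (\<And>a b. R a b \<Longrightarrow> R' a b) \<Longrightarrow> abpath R' A B p"
  unfolding abpath_def using successively_mono by metis

lemma cross:
  assumes H: "\<forall>p. abpath R A B p \<longrightarrow> s \<in> set p"
    and P: "abpath R A B0 P" and Q: "abpath R A0 B Q"
    and z: "z \<in> set P" "z \<in> set Q" "z \<noteq> s"
    and sP: "s \<in> set P \<Longrightarrow> s = last P" and sQ: "s \<in> set Q \<Longrightarrow> s = hd Q"
  shows False
proof -
  obtain P1 P2 where P12: "P = P1 @ z # P2" using z(1) split_list by metis
  obtain Q1 Q2 where Q12: "Q = Q1 @ z # Q2" using z(2) split_list by metis
  define W where "W = P1 @ z # Q2"
  have dP: "distinct P" and dQ: "distinct Q" using P Q by (auto simp: abpath_def)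
  have sP1: "s \<notin> set P1"
  proof
    assume "s \<in> set P1"
    then have "s = last P" using sP P12 by auto
    then have "s \<in> set (z # P2)" using P12 by auto
    with \<open>s \<in> set P1\<close> dP P12 show False by auto
  qed
  have sQ2: "s \<notin> set Q2"
  proof
    assume "s \<in> set Q2"
    then have "s = hd Q" using sQ Q12 by auto
    then have "s \<in> set (Q1 @ [z])" using Q12 by (cases Q1) auto
    with \<open>s \<in> set Q2\<close> dQ Q12 show False by auto
  qed
  have sW: "s \<notin> set W" using sP1 sQ2 z(3) W_def by auto
  have succ: "successively R W"
    using P Q unfolding abpath_def P12 Q12 W_def
    by (auto simp: successively_append_iff successively_Cons split: if_splits)
  have "W \<noteq> []" by (simp add: W_def)
  from walk_to_path[OF this succ] obtain p where p: "p \<noteq> [] \<and> distinct p \<and> successively R p \<and> set p \<subseteq> set W \<and> hd p = hd W \<and> last p = last W" by blast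
  have "hd W = hd P" "last W = last Q" unfolding W_def P12 Q12 by (auto simp: hd_append)
  then have "abpath R A B p" using p P Q unfolding abpath_def by auto
  with H have "s \<in> set p" by blast
  with p sW show False by auto
qed



lemma menger2:
  assumes "finite Ed" "\<forall>(a,b)\<in>Ed. a \<noteq> b"
    "\<forall>t. \<exists>p. abpath (\<lambda>a b. (a,b)\<in>Ed) A B p \<and> t \<notin> set p"
  shows "\<exists>p q. abpath (\<lambda>a b. (a,b)\<in>Ed) A B p \<and> abpath (\<lambda>a b. (a,b)\<in>Ed) A B q \<and> set p \<inter> set q = {}"
  using assms
proof (induction Ed arbitrary: A B rule: finite_induct)
  case empty
  have sing: "abpath (\<lambda>a b. (a,b)\<in>{}) A B p \<Longrightarrow> \<exists>a. p = [a]" for p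
    unfolding abpath_def by (cases p rule: remdups_adj.cases) auto
  obtain p1 where p1: "abpath (\<lambda>a b. (a,b)\<in>{}) A B p1" using empty.prems(2) by blast
  then obtain a1 where a1: "p1 = [a1]" using sing by blast
  obtain p2 where p2: "abpath (\<lambda>a b. (a,b)\<in>{}) A B p2" "a1 \<notin> set p2" using empty.prems(2) by blast
  then obtain a2 where a2: "p2 = [a2]" using sing by blast
  show ?case using p1 p2 a1 a2 by (intro exI[of _ p1] exI[of _ p2]) auto
next
  case (insert e F)
  obtain x y where e: "e = (x,y)" by (cases e)
  define R where "R = (\<lambda>a b. (a,b) \<in> insert e F)"
  define RF where "RF = (\<lambda>a b. (a,b) \<in> F)"
  have xy: "x \<noteq> y" using insert.prems(1) e by auto
  have noloopF: "\<forall>(a,b)\<in>F. a \<noteq> b" using insert.prems(1) by auto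
  have mono: "abpath RF A' B' p \<Longrightarrow> abpath R A' B' p" for A' B' p
    using abpath_mono unfolding R_def RF_def by fastforce
  show ?case
  proof (cases "\<forall>t. \<exists>p. abpath RF A B p \<and> t \<notin> set p")
    case True
    from insert.IH[OF noloopF True[unfolded RF_def]] obtain p q where
      "abpath RF A B p" "abpath RF A B q" "set p \<inter> set q = {}" unfolding RF_def by blast
    then show ?thesis using mono unfolding R_def by blast
  next
    case False
    then obtain s where H: "\<forall>p. abpath RF A B p \<longrightarrow> s \<in> set p" by blast
    have K: "x \<in> set p \<and> y \<in> set p" if "abpath R A B p" "s \<notin> set p" for p
    proof (rule ccontr)
      assume "\<not> (x \<in> set p \<and> y \<in> set p)"
      then have "successively RF p"
        using that(1) unfolding abpath_def R_def RF_def e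
        by (auto elim!: successively_mono)
      then have "abpath RF A B p" using that(1) by (auto simp: abpath_def)
      with H that(2) show False by blast
    qed
    have sx: "s \<noteq> x" and sy: "s \<noteq> y"
    proof -
      obtain p where "abpath R A B p" "s \<notin> set p" using insert.prems(2) unfolding R_def by blast
      with K show "s \<noteq> x" "s \<noteq> y" by blast+
    qed
    have IH1: "\<forall>t. \<exists>p. abpath RF A {s,x} p \<and> t \<notin> set p"
    proof
      fix t
      obtain p where p: "abpath R A B p" "t \<notin> set p" using insert.prems(2) unfolding R_def by blast
      then have "\<exists>z\<in>set p. z \<in> {s,x}" using K by blast
      from trunc_first[OF p(1) this] obtain p' where p': "abpath R A {s,x} p'" "set p' \<subseteq> set p"
        "\<forall>a\<in>set (butlast p'). a \<notin> {s,x}" by blast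
      have "successively RF p'" using drop_edge_first[of x y F p'] p'(1) p'(3)
        unfolding abpath_def R_def RF_def e by auto
      then have "abpath RF A {s,x} p'" using p'(1) by (auto simp: abpath_def)
      then show "\<exists>p. abpath RF A {s,x} p \<and> t \<notin> set p" using p'(2) p(2) by blast
    qed
    from insert.IH[OF noloopF IH1[unfolded RF_def]] obtain P1 P2 where
      P12: "abpath RF A {s,x} P1" "abpath RF A {s,x} P2" "set P1 \<inter> set P2 = {}" unfolding RF_def by blast
    obtain P1' where P1': "abpath RF A {s,x} P1'" "set P1' \<subseteq> set P1" "\<forall>a\<in>set (butlast P1'). a \<notin> {s,x}"
      using trunc_first[OF P12(1), of "{s,x}"] P12(1) unfolding abpath_def by (metis last_in_set)
    obtain P2' where P2': "abpath RF A {s,x} P2'" "set P2' \<subseteq> set P2" "\<forall>a\<in>set (butlast P2'). a \<notin> {s,x}"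
      using trunc_first[OF P12(2), of "{s,x}"] P12(2) unfolding abpath_def by (metis last_in_set)
    have nointer: "\<forall>a\<in>set P. a \<notin> T" if "\<forall>a\<in>set (butlast P). a \<notin> T" "last P \<notin> T" "P \<noteq> []" for P :: "'a list" and T
      using that by (metis append_butlast_last_id butlast.simps(2) in_set_butlastD last_ConsL last_ConsR
          list.distinct(1) rotate1.simps(2) set_ConsD set_rotate1)
    have "\<exists>Ps Px. abpath RF A {s} Ps \<and> abpath RF A {x} Px \<and> set Ps \<inter> set Px = {} \<and> x \<notin> set Ps \<and> s \<notin> set Px"
    proof -
      have d: "last P1' \<noteq> last P2'" using P1' P2' P12(3) unfolding abpath_def
        by (metis disjoint_iff last_in_set subset_iff)
      have l1: "last P1' \<in> {s,x}" and l2: "last P2' \<in> {s,x}" using P1' P2' by (auto simp: abpath_def)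
      have ne1: "P1' \<noteq> []" and ne2: "P2' \<noteq> []" using P1' P2' by (auto simp: abpath_def)
      have disj: "set P1' \<inter> set P2' = {}" using P1' P2' P12(3) by blast
      show ?thesis
      proof (cases "last P1' = s")
        case True
        then have "last P2' = x" using d l2 by auto
        then show ?thesis using True P1' P2' disj sx nointer[of P1' "{x}"] nointer[of P2' "{s}"] ne1 ne2
          by (intro exI[of _ P1'] exI[of _ P2']) (auto simp: abpath_def)
      next
        case False
        then have "last P1' = x" "last P2' = s" using d l1 l2 by auto
        then show ?thesis using P1' P2' disj sx nointer[of P2' "{x}"] nointer[of P1' "{s}"] ne1 ne2
          by (intro exI[of _ P2'] exI[of _ P1']) (auto simp: abpath_def)
      qed
    qed
    then obtain Ps Px where Ps: "abpath RF A {s} Ps" and Px: "abpath RF A {x} Px"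
      and dPsx: "set Ps \<inter> set Px = {}" and xPs: "x \<notin> set Ps" and sPx: "s \<notin> set Px" by blast
    have IH2: "\<forall>t. \<exists>p. abpath RF {s,y} B p \<and> t \<notin> set p"
    proof
      fix t
      obtain p where p: "abpath R A B p" "t \<notin> set p" using insert.prems(2) unfolding R_def by blast
      then have "\<exists>z\<in>set p. z \<in> {s,y}" using K by blast
      from trunc_last[OF p(1) this] obtain p' where p': "abpath R {s,y} B p'" "set p' \<subseteq> set p"
        "\<forall>a\<in>set (tl p'). a \<notin> {s,y}" by blast
      have "successively RF p'" using drop_edge_last[of x y F p'] p'(1) p'(3)
        unfolding abpath_def R_def RF_def e by auto
      then have "abpath RF {s,y} B p'" using p'(1) by (auto simp: abpath_def)
      then show "\<exists>p. abpath RF {s,y} B p \<and> t \<notin> set p" using p'(2) p(2) by blast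
    qed
    from insert.IH[OF noloopF IH2[unfolded RF_def]] obtain Q1 Q2 where
      Q12: "abpath RF {s,y} B Q1" "abpath RF {s,y} B Q2" "set Q1 \<inter> set Q2 = {}" unfolding RF_def by blast
    obtain Q1' where Q1': "abpath RF {s,y} B Q1'" "set Q1' \<subseteq> set Q1" "\<forall>a\<in>set (tl Q1'). a \<notin> {s,y}"
      using trunc_last[OF Q12(1), of "{s,y}"] Q12(1) unfolding abpath_def by (metis hd_in_set)
    obtain Q2' where Q2': "abpath RF {s,y} B Q2'" "set Q2' \<subseteq> set Q2" "\<forall>a\<in>set (tl Q2'). a \<notin> {s,y}"
      using trunc_last[OF Q12(2), of "{s,y}"] Q12(2) unfolding abpath_def by (metis hd_in_set)
    have nointer2: "\<forall>a\<in>set P. a \<notin> T" if "\<forall>a\<in>set (tl P). a \<notin> T" "hd P \<notin> T" "P \<noteq> []" for P :: "'a list" and T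
      using that by (cases P) auto
    have "\<exists>Qs Qy. abpath RF {s} B Qs \<and> abpath RF {y} B Qy \<and> set Qs \<inter> set Qy = {} \<and> y \<notin> set Qs \<and> s \<notin> set Qy"
    proof -
      have d: "hd Q1' \<noteq> hd Q2'" using Q1' Q2' Q12(3) unfolding abpath_def
        by (metis disjoint_iff hd_in_set subset_iff)
      have l1: "hd Q1' \<in> {s,y}" and l2: "hd Q2' \<in> {s,y}" using Q1' Q2' by (auto simp: abpath_def)
      have ne1: "Q1' \<noteq> []" and ne2: "Q2' \<noteq> []" using Q1' Q2' by (auto simp: abpath_def)
      have disj: "set Q1' \<inter> set Q2' = {}" using Q1' Q2' Q12(3) by blast
      show ?thesis
      proof (cases "hd Q1' = s")
        case True
        then have "hd Q2' = y" using d l2 by auto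
        then show ?thesis using True Q1' Q2' disj sy nointer2[of Q1' "{y}"] nointer2[of Q2' "{s}"] ne1 ne2
          by (intro exI[of _ Q1'] exI[of _ Q2']) (auto simp: abpath_def)
      next
        case False
        then have "hd Q1' = y" "hd Q2' = s" using d l1 l2 by auto
        then show ?thesis using Q1' Q2' disj sy nointer2[of Q2' "{y}"] nointer2[of Q1' "{s}"] ne1 ne2
          by (intro exI[of _ Q2'] exI[of _ Q1']) (auto simp: abpath_def)
      qed
    qed
    then obtain Qs Qy where Qs: "abpath RF {s} B Qs" and Qy: "abpath RF {y} B Qy"
      and dQsy: "set Qs \<inter> set Qy = {}" and yQs: "y \<notin> set Qs" and sQy: "s \<notin> set Qy" by blast
    have crossing: "set P \<inter> set Q \<subseteq> {s}" if "abpath RF A B0 P" "abpath RF A0 B Q"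
      "s \<in> set P \<Longrightarrow> s = last P" "s \<in> set Q \<Longrightarrow> s = hd Q" for P Q B0 A0
      using cross[OF H that(1) that(2) _ _ _ that(3) that(4)] by blast
    have c1: "set Ps \<inter> set Qs \<subseteq> {s}" using crossing[OF Ps Qs] Ps Qs by (auto simp: abpath_def)
    have c2: "set Ps \<inter> set Qy = {}" using crossing[OF Ps Qy] Ps sQy by (auto simp: abpath_def)
    have c3: "set Px \<inter> set Qs = {}" using crossing[OF Px Qs] Qs sPx by (auto simp: abpath_def)
    have c4: "set Px \<inter> set Qy = {}" using crossing[OF Px Qy] sPx sQy by (auto simp: abpath_def)
    define R1 where "R1 = Ps @ tl Qs"
    define R2 where "R2 = Px @ Qy"
    have Psl: "last Ps = s" and Qsh: "hd Qs = s" and Pxl: "last Px = x" and Qyh: "hd Qy = y"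
      using Ps Qs Px Qy by (auto simp: abpath_def)
    have dQs: "distinct Qs" and neQs: "Qs \<noteq> []" using Qs by (auto simp: abpath_def)
    have sQs: "s \<notin> set (tl Qs)" using dQs neQs Qsh by (cases Qs) auto
    have Qs_eq: "Qs = s # tl Qs" using neQs Qsh by (cases Qs) auto
    have R1: "abpath R A B R1"
    proof -
      have "successively R Ps" "successively R Qs" using mono[OF Ps] mono[OF Qs] by (auto simp: abpath_def)
      moreover have "successively R (tl Qs) \<and> (tl Qs \<noteq> [] \<longrightarrow> R s (hd (tl Qs)))"
      proof -
        have "successively R (s # tl Qs)" using \<open>successively R Qs\<close> Qs_eq by metis
        then show ?thesis by (auto simp: successively_Cons)
      qed
      ultimately have "successively R R1" unfolding R1_def using Psl
        by (auto simp: successively_append_iff)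
      moreover have "distinct R1" unfolding R1_def using Ps dQs c1 sQs
        by (auto simp: abpath_def distinct_tl dest: list.set_sel(2)[OF neQs])
      moreover have "hd R1 \<in> A" using Ps unfolding R1_def abpath_def by auto
      moreover have "last R1 \<in> B" using Qs Psl unfolding R1_def abpath_def
        by (metis Qs_eq last_ConsL last_ConsR last_append)
      moreover have "R1 \<noteq> []" using Ps unfolding R1_def abpath_def by auto
      ultimately show ?thesis unfolding abpath_def by blast
    qed
    have R2: "abpath R A B R2"
    proof -
      have "successively R Px" "successively R Qy" using mono[OF Px] mono[OF Qy] by (auto simp: abpath_def)
      moreover have "R x y" unfolding R_def e by auto
      ultimately have "successively R R2" unfolding R2_def using Pxl Qyh Px Qy
        by (auto simp: successively_append_iff abpath_def)
      moreover have "distinct R2" unfolding R2_def using Px Qy c4 by (auto simp: abpath_def)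
      moreover have "hd R2 \<in> A" using Px unfolding R2_def abpath_def by auto
      moreover have "last R2 \<in> B" using Qy unfolding R2_def abpath_def by auto
      moreover have "R2 \<noteq> []" using Px unfolding R2_def abpath_def by auto
      ultimately show ?thesis unfolding abpath_def by blast
    qed
    have "set R1 \<inter> set R2 = {}" unfolding R1_def R2_def using dPsx c2 c3 dQsy
      by (auto dest: list.set_sel(2)[OF neQs])
    then show ?thesis using R1 R2 unfolding R_def by blast
  qed
qed



lemma dpath_alt: "dpath S E p \<longleftrightarrow> p \<noteq> [] \<and> distinct p \<and> set p \<subseteq> S \<and> successively E p"
  unfolding dpath_def successively_conv_nth by auto

lemma walk_dpath:
  assumes "w \<noteq> []" "successively E w" "set w \<subseteq> S"
  shows "\<exists>p. dpath_from_to S E (hd w) (last w) p \<and> set p \<subseteq> set w"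
proof -
  from walk_to_path[OF assms(1,2)] obtain p where
    "p \<noteq> [] \<and> distinct p \<and> successively E p \<and> set p \<subseteq> set w \<and> hd p = hd w \<and> last p = last w" by blast
  then show ?thesis using assms(3) unfolding dpath_from_to_def dpath_alt by blast
qed

lemma split_rv:
  assumes "dpath_from_to S E r v p" "r \<noteq> v" "\<not> E r v"
  shows "\<exists>m. p = r # m @ [v] \<and> m \<noteq> []"
proof -
  have p: "p \<noteq> []" "hd p = r" "last p = v" "successively E p"
    using assms(1) unfolding dpath_from_to_def dpath_alt by auto
  then obtain p' where p': "p = r # p'" by (cases p) auto
  have "p' \<noteq> []" using p p' assms(2) by auto
  then have p'': "p' = butlast p' @ [v]" using p p' by auto
  have "butlast p' \<noteq> []"
  proof
    assume "butlast p' = []"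
    then have "p = [r, v]" using p' p'' by simp
    then show False using p(4) assms(3) by simp
  qed
  then show ?thesis using p' p'' by metis
qed

lemma abpath_in:
  assumes "abpath (\<lambda>a b. (a,b)\<in>Ed) A B p" "A \<subseteq> T" "Ed \<subseteq> T \<times> T"
  shows "set p \<subseteq> T"
proof
  fix z assume "z \<in> set p"
  then obtain i where i: "i < length p" "z = p ! i" by (metis in_set_conv_nth)
  show "z \<in> T"
  proof (cases i)
    case 0
    then have "z = hd p" using i assms(1) by (simp add: abpath_def hd_conv_nth)
    then show ?thesis using assms unfolding abpath_def by auto
  next
    case (Suc j)
    then have "(p ! j, p ! Suc j) \<in> Ed" using i assms(1) unfolding abpath_def
      using successively_nth by fastforce
    then show ?thesis using assms(3) i Suc by auto
  qed
qed

lemma lemM: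
  assumes "finite S" "r \<in> S" "v \<in> S" "r \<noteq> v" "\<not> E r v"
    and sep: "\<forall>w\<in>S - {r,v}. \<exists>p. dpath_from_to S E r v p \<and> w \<notin> set p"
    and reach: "reachable S E r v"
  shows "bireachable S E r v"
proof -
  define S' where "S' = S - {r,v}"
  define Ed where "Ed = {(a,b). a \<in> S' \<and> b \<in> S' \<and> E a b \<and> a \<noteq> b}"
  define A where "A = {a\<in>S'. E r a}"
  define B where "B = {b\<in>S'. E b v}"
  have finEd: "finite Ed"
  proof (rule finite_subset)
    show "Ed \<subseteq> S \<times> S" unfolding Ed_def S'_def by auto
  qed (use assms(1) in auto)
  have noloop: "\<forall>(a,b)\<in>Ed. a \<noteq> b" unfolding Ed_def by auto
  have toab: "\<exists>m. abpath (\<lambda>a b. (a,b)\<in>Ed) A B m \<and> set m \<subseteq> set p"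
    if p: "dpath_from_to S E r v p" for p
  proof -
    obtain m where m: "p = r # m @ [v]" "m \<noteq> []" using split_rv[OF p assms(4,5)] by blast
    have dp: "distinct p" "set p \<subseteq> S" "successively E p" using p unfolding dpath_from_to_def dpath_alt by auto
    have dm: "distinct m" "set m \<subseteq> S'" using dp m unfolding S'_def by auto
    have sm: "successively E m" "E r (hd m)" "E (last m) v" using dp(3) m
      by (auto simp: successively_append_iff successively_Cons)
    have "successively (\<lambda>a b. (a,b)\<in>Ed) m"
      unfolding successively_conv_nth
    proof (intro allI impI)
      fix i assume i: "Suc i < length m"
      have "E (m!i) (m ! Suc i)" using successively_nth[OF sm(1) i] .
      moreover have "m ! i \<noteq> m ! Suc i" using dm(1) i by (simp add: nth_eq_iff_index_eq)
      moreover have "m ! i \<in> S'" "m ! Suc i \<in> S'" using dm(2) i by (auto dest: nth_mem)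
      ultimately show "(m!i, m ! Suc i) \<in> Ed" unfolding Ed_def by auto
    qed
    moreover have "hd m \<in> A" "last m \<in> B" using sm dm m(2) unfolding A_def B_def by auto
    ultimately have "abpath (\<lambda>a b. (a,b)\<in>Ed) A B m \<and> set m \<subseteq> set p" using dm m unfolding abpath_def by auto
    then show ?thesis by blast
  qed
  have "\<forall>t. \<exists>m. abpath (\<lambda>a b. (a,b)\<in>Ed) A B m \<and> t \<notin> set m"
  proof
    fix t
    obtain p where p: "dpath_from_to S E r v p" "t \<in> S - {r,v} \<longrightarrow> t \<notin> set p"
      using sep reach unfolding reachable_def by blast
    obtain m where m: "abpath (\<lambda>a b. (a,b)\<in>Ed) A B m" "set m \<subseteq> set p" using toab[OF p(1)] by blast
    have "set m \<subseteq> S'" using abpath_in[OF m(1), of S'] unfolding A_def Ed_def by auto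
    then have "t \<notin> set m" using p(2) m(2) unfolding S'_def by auto
    with m show "\<exists>m. abpath (\<lambda>a b. (a,b)\<in>Ed) A B m \<and> t \<notin> set m" by blast
  qed
  from menger2[OF finEd noloop this] obtain p q where
    pq: "abpath (\<lambda>a b. (a,b)\<in>Ed) A B p" "abpath (\<lambda>a b. (a,b)\<in>Ed) A B q" "set p \<inter> set q = {}" by blast
  have sub: "A \<subseteq> S'" "Ed \<subseteq> S' \<times> S'" unfolding A_def Ed_def by auto
  have mk: "dpath_from_to S E r v (r # m @ [v]) \<and> internal_vertices (r # m @ [v]) = set m"
    if m: "abpath (\<lambda>a b. (a,b)\<in>Ed) A B m" for m
  proof -
    have ms: "set m \<subseteq> S'" using abpath_in[OF m sub] .
    have m1: "m \<noteq> []" "distinct m" "successively (\<lambda>a b. (a,b)\<in>Ed) m" "hd m \<in> A" "last m \<in> B"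
      using m unfolding abpath_def by auto
    have "successively E m" using m1(3) by (rule successively_mono) (auto simp: Ed_def)
    then have "successively E (r # m @ [v])"
      using m1 unfolding A_def B_def by (auto simp: successively_append_iff successively_Cons)
    moreover have "distinct (r # m @ [v])" using ms m1 assms(4) unfolding S'_def by auto
    moreover have "set (r # m @ [v]) \<subseteq> S" using ms assms(2,3) unfolding S'_def by auto
    ultimately show ?thesis using ms unfolding dpath_from_to_def dpath_alt internal_vertices_def S'_def
      by auto
  qed
  have "r # p @ [v] \<noteq> r # q @ [v]" using pq unfolding abpath_def by auto
  then show ?thesis unfolding bireachable_def using mk[OF pq(1)] mk[OF pq(2)] pq(3) by metis
qed



lemma in_set_tlD: "x \<in> set (tl xs) \<Longrightarrow> x \<in> set xs" by (cases xs) auto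

lemma dp_prefix:
  assumes "dpath_from_to S E a b (ys @ z # zs)"
  shows "dpath_from_to S E a z (ys @ [z])"
  using assms unfolding dpath_from_to_def dpath_alt
  by (auto simp: successively_append_iff hd_append split: if_splits)

lemma dp_suffix:
  assumes "dpath_from_to S E a b (ys @ z # zs)"
  shows "dpath_from_to S E z b (z # zs)"
  using assms unfolding dpath_from_to_def dpath_alt
  by (auto simp: successively_append_iff successively_Cons split: if_splits)

lemma dp_concat:
  assumes "dpath_from_to S E a b p" "dpath_from_to S E b c q"
  shows "\<exists>p'. dpath_from_to S E a c p' \<and> set p' \<subseteq> set p \<union> set q"
proof -
  have p: "p \<noteq> []" "set p \<subseteq> S" "successively E p" "hd p = a" "last p = b"
    using assms(1) unfolding dpath_from_to_def dpath_alt by auto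
  have q: "q \<noteq> []" "set q \<subseteq> S" "successively E q" "hd q = b" "last q = c"
    using assms(2) unfolding dpath_from_to_def dpath_alt by auto
  then have qe: "q = b # tl q" by (cases q) auto
  have sq: "successively E (tl q) \<and> (tl q \<noteq> [] \<longrightarrow> E b (hd (tl q)))"
  proof -
    have "successively E (b # tl q)" using q(3) qe by metis
    then show ?thesis by (auto simp: successively_Cons)
  qed
  define W where "W = p @ tl q"
  have "W \<noteq> []" "successively E W" "set W \<subseteq> S" using p q sq unfolding W_def
    by (auto simp: successively_append_iff dest: in_set_tlD)
  moreover have "hd W = a" "last W = c" using p q qe unfolding W_def
    by (auto simp: hd_append) (metis last_ConsL last_ConsR last_append)
  moreover have "set W \<subseteq> set p \<union> set q" unfolding W_def by (auto dest: in_set_tlD)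
  ultimately show ?thesis using walk_dpath[of W E S] by (metis order_trans)
qed

lemma diblock_sub: "r \<in> S \<Longrightarrow> diblock S E r \<subseteq> S"
  unfolding diblock_def by auto

lemma r_in_diblock: "r \<in> diblock S E r"
  unfolding diblock_def by auto

lemma Xset_sub: "Xset S E r x \<subseteq> S - diblock S E r"
  unfolding Xset_def by auto

lemma dp_props:
  assumes "dpath_from_to S E a b p"
  shows "p \<noteq> []" "distinct p" "set p \<subseteq> S" "successively E p" "hd p = a" "last p = b"
  using assms unfolding dpath_from_to_def dpath_alt by auto

lemma partition:
  assumes fin: "finite S" and rS: "r \<in> S" and reach: "\<forall>v\<in>S. reachable S E r v"
    and vS: "v \<in> S" and vB: "v \<notin> diblock S E r"
  shows "\<exists>x. x \<in> diblock S E r - {r} \<and> v \<in> Xset S E r x"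
proof -
  define Bk where "Bk = diblock S E r"
  have M': "\<exists>w\<in>S-{r,y}. \<forall>p. dpath_from_to S E r y p \<longrightarrow> w \<in> set p" if y: "y \<in> S" "y \<notin> Bk" for y
  proof (rule ccontr)
    assume "\<not> ?thesis"
    then have sep: "\<forall>w\<in>S - {r,y}. \<exists>p. dpath_from_to S E r y p \<and> w \<notin> set p" by blast
    have "r \<noteq> y" "\<not> E r y" "\<not> bireachable S E r y" using y unfolding Bk_def diblock_def by auto
    with lemM[OF fin rS y(1) _ _ sep] reach y(1) show False by blast
  qed
  define D where "D = {w\<in>S-{r,v}. \<forall>p. dpath_from_to S E r v p \<longrightarrow> w \<in> set p}"
  obtain P0 where P0: "dpath_from_to S E r v P0" using reach vS unfolding reachable_def by blast
  obtain w0 where "w0 \<in> D" using M'[OF vS] vB unfolding D_def Bk_def by blast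
  then have "\<exists>z\<in>set P0. z \<in> D" using P0 unfolding D_def by blast
  then obtain ys x zs where P0d: "P0 = ys @ x # zs" "x \<in> D" "\<forall>a\<in>set ys. a \<notin> D"
    using split_list_first_prop[of P0 "\<lambda>z. z \<in> D"] by blast
  have xS: "x \<in> S" "x \<noteq> r" "x \<noteq> v" using P0d(2) unfolding D_def by auto
  have dP0: "distinct P0" "last P0 = v" using dp_props[OF P0] by auto
  have xB: "x \<in> Bk"
  proof (rule ccontr)
    assume "x \<notin> Bk"
    from M'[OF xS(1) this] obtain w where w: "w \<in> S - {r,x}" "\<forall>p. dpath_from_to S E r x p \<longrightarrow> w \<in> set p" by blast
    have "dpath_from_to S E r x (ys @ [x])" using dp_prefix P0 P0d(1) by metis
    then have "w \<in> set ys" using w by auto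
    moreover have "w \<in> D"
    proof -
      have "w \<noteq> v"
      proof
        assume "w = v"
        then have "w \<in> set (x # zs)" using dP0 P0d(1) by (metis last_appendR last_in_set list.distinct(1))
        with \<open>w \<in> set ys\<close> dP0 P0d(1) show False by auto
      qed
      moreover have "w \<in> set p" if p: "dpath_from_to S E r v p" for p
      proof -
        have "x \<in> set p" using P0d(2) p unfolding D_def by auto
        then obtain ps qs where "p = ps @ x # qs" by (metis split_list)
        then have "dpath_from_to S E r x (ps @ [x])" using dp_prefix p by metis
        then have "w \<in> set (ps @ [x])" using w by blast
        then show ?thesis using \<open>p = ps @ x # qs\<close> by auto
      qed
      ultimately show ?thesis using w unfolding D_def by auto
    qed
    ultimately show False using P0d(3) by blast
  qed
  have "v \<in> Xset S E r x" unfolding Xset_def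
  proof (intro CollectI conjI allI impI)
    show "v \<in> S - diblock S E r" using vS vB by auto
    fix p assume p: "dpath_from_to S E r v p"
    have "x \<in> set p" using P0d(2) p unfolding D_def by auto
    then obtain ps qs where pd: "p = ps @ x # qs" by (metis split_list)
    have dp: "distinct p" "hd p = r" using dp_props[OF p] by auto
    have "\<forall>y\<in>set qs. y \<notin> Bk"
    proof (intro ballI notI)
      fix y assume yq: "y \<in> set qs" and yB: "y \<in> Bk"
      obtain qs1 qs2 where qd: "qs = qs1 @ y # qs2" using yq by (metis split_list)
      have "r \<in> set (ps @ [x])" using dp(2) pd by (cases ps) auto
      then have yr: "y \<noteq> r" using dp(1) pd yq by auto
      have xy: "x \<noteq> y" using dp(1) pd yq by auto
      have "\<exists>q. dpath_from_to S E r y q \<and> x \<notin> set q"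
      proof -
        have yS: "y \<in> S" using dp_props(3)[OF p] pd yq by auto
        show ?thesis
        proof (cases "E r y")
          case True
          have "dpath_from_to S E r y [r,y]" using True yS rS yr unfolding dpath_from_to_def dpath_alt by auto
          then show ?thesis using xS(2) xy by auto
        next
          case False
          then have "bireachable S E r y" using yB yr unfolding Bk_def diblock_def by auto
          then obtain q1 q2 where q: "dpath_from_to S E r y q1" "dpath_from_to S E r y q2"
            "internal_vertices q1 \<inter> internal_vertices q2 = {}" unfolding bireachable_def by blast
          have "internal_vertices q1 = set q1 - {r,y}" "internal_vertices q2 = set q2 - {r,y}"
            using q(1,2) unfolding internal_vertices_def dpath_from_to_def by auto
          then have "x \<notin> set q1 \<or> x \<notin> set q2" using q(3) xS(2) xy by blast
          then show ?thesis using q by blast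
        qed
      qed
      then obtain q where q: "dpath_from_to S E r y q" "x \<notin> set q" by blast
      have "dpath_from_to S E y v (y # qs2)" using dp_suffix[of S E r v "ps @ x # qs1" y qs2] p pd qd by simp
      from dp_concat[OF q(1) this] obtain p' where p': "dpath_from_to S E r v p'" "set p' \<subseteq> set q \<union> set (y # qs2)" by blast
      have "x \<notin> set (y # qs2)" using dp(1) pd qd by auto
      then have "x \<notin> set p'" using p' q(2) by auto
      with p' P0d(2) show False unfolding D_def by auto
    qed
    then have "filter (\<lambda>w. w \<in> diblock S E r) qs = []" unfolding Bk_def by (simp add: filter_empty_conv)
    then show "last (filter (\<lambda>w. w \<in> diblock S E r) p) = x" using xB pd unfolding Bk_def by simp
  qed
  then show ?thesis using xB xS unfolding Bk_def by blast
qed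



lemma filter_last_in:
  assumes "z \<in> set xs" "P z"
  shows "last (filter P xs) \<in> set xs" "P (last (filter P xs))"
proof -
  have ne: "filter P xs \<noteq> []" using assms by (auto simp: filter_empty_conv)
  have "last (filter P xs) \<in> set (filter P xs)" using ne by (rule last_in_set)
  then show "last (filter P xs) \<in> set xs" "P (last (filter P xs))" by auto
qed

lemma avoid_Xset:
  assumes "x \<in> diblock S E r" "dpath_from_to S E r x p"
  shows "set p \<inter> Xset S E r x = {}"
proof (rule ccontr)
  assume "set p \<inter> Xset S E r x \<noteq> {}"
  then obtain w where w: "w \<in> set p" "w \<in> Xset S E r x" by blast
  then obtain ys zs where pd: "p = ys @ w # zs" by (metis split_list)
  have wB: "w \<notin> diblock S E r" using Xset_sub[of S E r x] w(2) by blast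
  have dp: "distinct p" "hd p = r" "last p = x" using dp_props[OF assms(2)] by auto
  have rB: "r \<in> diblock S E r" by (rule r_in_diblock)
  have "ys \<noteq> []"
  proof
    assume "ys = []"
    then have "w = r" using dp(2) pd by simp
    then show False using wB rB by simp
  qed
  then have hys: "r \<in> set ys" using dp(2) pd by (cases ys) auto
  have "dpath_from_to S E r w (ys @ [w])" using dp_prefix assms(2) pd by metis
  then have "last (filter (\<lambda>v. v \<in> diblock S E r) (ys @ [w])) = x" using w(2) unfolding Xset_def by blast
  then have lx: "last (filter (\<lambda>v. v \<in> diblock S E r) ys) = x" using wB by simp
  have "x \<in> set ys" using filter_last_in(1)[OF hys, of "\<lambda>v. v \<in> diblock S E r"] rB lx by simp
  moreover have "x \<in> set (w # zs)" using dp(3) pd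
    by (metis last_appendR last_in_set list.distinct(1))
  ultimately show False using dp(1) pd by auto
qed

lemma reach_sub:
  assumes fin: "finite S" and rS: "r \<in> S" and reach: "\<forall>v\<in>S. reachable S E r v"
    and v: "v \<in> Xset S E r x"
  shows "reachable (Xset S E r x \<union> {x}) E x v"
proof -
  define Bk where "Bk = diblock S E r"
  have vS: "v \<in> S" using Xset_sub[of S E r x] v by blast
  obtain p where p: "dpath_from_to S E r v p" using reach vS unfolding reachable_def by blast
  have lx: "last (filter (\<lambda>w. w \<in> Bk) p) = x" using v p unfolding Xset_def Bk_def by blast
  have dp: "distinct p" "hd p = r" "p \<noteq> []" using dp_props[OF p] by auto
  have "filter (\<lambda>w. w \<in> Bk) p \<noteq> []" using dp r_in_diblock[of r S E] unfolding Bk_def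
    by (metis (mono_tags, lifting) filter_empty_conv list.set_sel(1))
  then have "x \<in> set (filter (\<lambda>w. w \<in> Bk) p)" using lx last_in_set by metis
  then have xp: "x \<in> set p" "x \<in> Bk" by auto
  then obtain ps qs where pd: "p = ps @ x # qs" by (metis split_list)
  have qB: "\<forall>z\<in>set qs. z \<notin> Bk"
  proof (intro ballI notI)
    fix z assume "z \<in> set qs" "z \<in> Bk"
    then have ne: "filter (\<lambda>w. w \<in> Bk) qs \<noteq> []" by (metis (mono_tags, lifting) filter_empty_conv)
    then have "x = last (filter (\<lambda>w. w \<in> Bk) qs)" using lx pd xp(2) by simp
    then have "x \<in> set qs" using ne by (metis filter_is_subset last_in_set subsetD)
    then show False using dp(1) pd by auto
  qed
  have "set qs \<subseteq> Xset S E r x"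
  proof
    fix z assume zq: "z \<in> set qs"
    then obtain qs1 qs2 where qd: "qs = qs1 @ z # qs2" by (metis split_list)
    have zS: "z \<in> S" using dp_props(3)[OF p] pd zq by auto
    have zB: "z \<notin> Bk" using qB zq by auto
    from partition[OF fin rS reach zS zB[unfolded Bk_def]] obtain y where y: "z \<in> Xset S E r y" by blast
    have "dpath_from_to S E r z ((ps @ x # qs1) @ [z])" using dp_prefix[of S E r v "ps @ x # qs1" z qs2] p pd qd by simp
    then have "last (filter (\<lambda>w. w \<in> Bk) ((ps @ x # qs1) @ [z])) = y" using y unfolding Xset_def Bk_def by blast
    moreover have "filter (\<lambda>w. w \<in> Bk) qs1 = []" using qB qd by (auto simp: filter_empty_conv)
    ultimately have "y = x" using zB xp(2) by simp
    then show "z \<in> Xset S E r x" using y by simp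
  qed
  moreover have "dpath_from_to S E x v (x # qs)" using dp_suffix p pd by metis
  ultimately have "dpath_from_to (Xset S E r x \<union> {x}) E x v (x # qs)"
    unfolding dpath_from_to_def dpath_alt by auto
  then show ?thesis unfolding reachable_def by blast
qed

lemma seg:
  assumes fin: "finite S" and rS: "r \<in> S" and uB: "u \<in> diblock S E r"
    and rX: "r \<notin> X" and uX: "u \<notin> X"
    and Y: "\<forall>p. dpath_from_to S E r u p \<longrightarrow> set p \<inter> Y = {}"
  shows "\<exists>p. dpath_from_to S E r u p \<and> 2 * card (set p \<inter> X) \<le> card (X \<inter> S - Y)"
proof -
  have uS: "u \<in> S" using uB diblock_sub[OF rS] by blast
  consider "u = r" | "u \<noteq> r" "E r u" | "bireachable S E r u"
    using uB unfolding diblock_def by auto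
  then show ?thesis
  proof cases
    case 1
    have "dpath_from_to S E r u [r]" using 1 rS unfolding dpath_from_to_def dpath_alt by auto
    moreover have "set [r] \<inter> X = {}" using rX by auto
    ultimately show ?thesis by (metis card.empty mult_0_right zero_le)
  next
    case 2
    have "dpath_from_to S E r u [r,u]" using 2 rS uS unfolding dpath_from_to_def dpath_alt by auto
    moreover have "set [r,u] \<inter> X = {}" using rX uX by auto
    ultimately show ?thesis by (metis card.empty mult_0_right zero_le)
  next
    case 3
    then obtain p q where pq: "dpath_from_to S E r u p" "dpath_from_to S E r u q"
      "internal_vertices p \<inter> internal_vertices q = {}" unfolding bireachable_def by blast
    have ip: "internal_vertices p = set p - {r,u}" "internal_vertices q = set q - {r,u}"
      using pq(1,2) unfolding internal_vertices_def dpath_from_to_def by auto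
    have d: "(set p \<inter> X) \<inter> (set q \<inter> X) = {}" using pq(3) ip rX uX by blast
    have s: "set p \<inter> X \<subseteq> X \<inter> S - Y" "set q \<inter> X \<subseteq> X \<inter> S - Y"
      using Y pq(1,2) dp_props(3)[OF pq(1)] dp_props(3)[OF pq(2)] by blast+
    have fin2: "finite (X \<inter> S - Y)" using fin by auto
    have "card (set p \<inter> X) + card (set q \<inter> X) = card ((set p \<inter> X) \<union> (set q \<inter> X))"
      using d by (simp add: card_Un_disjoint)
    also have "\<dots> \<le> card (X \<inter> S - Y)" using s fin2 by (intro card_mono) auto
    finally have "card (set p \<inter> X) + card (set q \<inter> X) \<le> card (X \<inter> S - Y)" .
    then show ?thesis using pq(1,2)
      by (cases "card (set p \<inter> X) \<le> card (set q \<inter> X)") auto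
  qed
qed

lemma main:
  assumes "finite S" "r \<in> S" "\<forall>v\<in>S. reachable S E r v" "u \<in> S" "u \<notin> X"
    "\<forall>v. cut_tree_node E S r v \<longrightarrow> v \<notin> X"
  shows "\<exists>w. w \<noteq> [] \<and> successively E w \<and> set w \<subseteq> S \<and> hd w = r \<and> last w = u \<and>
           2 * card (set w \<inter> X) \<le> card (X \<inter> S)"
  using assms
proof (induction "card S" arbitrary: S r u rule: less_induct)
  case less
  have rX: "r \<notin> X" using less.prems(6) cut_tree_node.root by metis
  show ?case
  proof (cases "u \<in> diblock S E r")
    case True
    from seg[OF less.prems(1,2) True rX less.prems(5), where Y="{}"] obtain p where
      p: "dpath_from_to S E r u p" "2 * card (set p \<inter> X) \<le> card (X \<inter> S)" by auto
    then show ?thesis using dp_props[OF p(1)] by blast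
  next
    case False
    from partition[OF less.prems(1-4) False] obtain x where
      x: "x \<in> diblock S E r - {r}" "u \<in> Xset S E r x" by blast
    define Y where "Y = Xset S E r x"
    have bn: "bottleneck S E r x" unfolding bottleneck_def using x by auto
    have xX: "x \<notin> X" using less.prems(6) cut_tree_node.sub[OF bn cut_tree_node.root] by metis
    have xS: "x \<in> S" using x diblock_sub[OF less.prems(2)] by blast
    from seg[OF less.prems(1,2) _ rX xX, where Y=Y] x avoid_Xset[of x S E r] obtain p1 where
      p1: "dpath_from_to S E r x p1" "2 * card (set p1 \<inter> X) \<le> card (X \<inter> S - Y)"
      unfolding Y_def by blast
    define S' where "S' = Y \<union> {x}"
    have YS: "Y \<subseteq> S - diblock S E r" unfolding Y_def by (rule Xset_sub)
    have S'S: "S' \<subseteq> S" using YS xS unfolding S'_def by auto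
    have rS': "r \<notin> S'" using YS x r_in_diblock[of r S E] unfolding S'_def by auto
    have card: "card S' < card S"
      using S'S rS' less.prems(1,2) by (intro psubset_card_mono) auto
    have fin': "finite S'" using S'S less.prems(1) finite_subset by auto
    have reach': "\<forall>v\<in>S'. reachable S' E x v"
    proof
      fix v assume "v \<in> S'"
      then consider "v = x" | "v \<in> Y" unfolding S'_def by auto
      then show "reachable S' E x v"
      proof cases
        case 1
        have "dpath_from_to S' E x x [x]" unfolding dpath_from_to_def dpath_alt S'_def using 1 by auto
        then show ?thesis using 1 unfolding reachable_def by blast
      next
        case 2
        then show ?thesis using reach_sub[OF less.prems(1-3)] unfolding S'_def Y_def by blast
      qed
    qed
    have tn': "\<forall>v. cut_tree_node E S' x v \<longrightarrow> v \<notin> X"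
      using less.prems(6) cut_tree_node.sub[OF bn] unfolding S'_def Y_def by blast
    have uS': "u \<in> S'" using x unfolding S'_def Y_def by auto
    from less.hyps[OF card fin' _ reach' uS' less.prems(5) tn'] obtain w2 where
      w2: "w2 \<noteq> []" "successively E w2" "set w2 \<subseteq> S'" "hd w2 = x" "last w2 = u"
        "2 * card (set w2 \<inter> X) \<le> card (X \<inter> S')" unfolding S'_def by auto
    have pp: "p1 \<noteq> []" "successively E p1" "set p1 \<subseteq> S" "hd p1 = r" "last p1 = x" using dp_props[OF p1(1)] by auto
    have we: "w2 = x # tl w2" using w2 by (cases w2) auto
    have sq: "successively E (tl w2) \<and> (tl w2 \<noteq> [] \<longrightarrow> E x (hd (tl w2)))"
    proof -
      have "successively E (x # tl w2)" using w2(2) we by metis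
      then show ?thesis by (auto simp: successively_Cons)
    qed
    define W where "W = p1 @ tl w2"
    have "W \<noteq> []" "successively E W" using pp sq unfolding W_def
      by (auto simp: successively_append_iff)
    moreover have sW: "set W \<subseteq> set p1 \<union> set w2" unfolding W_def by (auto dest: in_set_tlD)
    moreover have "set W \<subseteq> S" using sW pp w2 S'S by auto
    moreover have "hd W = r" "last W = u" using pp w2 we unfolding W_def
      by (auto simp: hd_append) (metis last_ConsL last_ConsR last_append)
    moreover have "2 * card (set W \<inter> X) \<le> card (X \<inter> S)"
    proof -
      have "card (set W \<inter> X) \<le> card ((set p1 \<inter> X) \<union> (set w2 \<inter> X))"
        using sW by (intro card_mono) auto
      also have "\<dots> \<le> card (set p1 \<inter> X) + card (set w2 \<inter> X)" by (rule card_Un_le)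
      finally have a: "card (set W \<inter> X) \<le> card (set p1 \<inter> X) + card (set w2 \<inter> X)" .
      have "X \<inter> S' = X \<inter> Y" using xX unfolding S'_def by auto
      have "card (X \<inter> S - Y) + card (X \<inter> Y) = card ((X \<inter> S - Y) \<union> (X \<inter> Y))"
        using less.prems(1) YS by (intro card_Un_disjoint[symmetric]) (auto intro: finite_subset)
      also have "(X \<inter> S - Y) \<union> (X \<inter> Y) = X \<inter> S" using YS by auto
      finally have b: "card (X \<inter> S - Y) + card (X \<inter> Y) = card (X \<inter> S)" .
      have c: "2 * card (set w2 \<inter> X) \<le> card (X \<inter> Y)" using w2(6) \<open>X \<inter> S' = X \<inter> Y\<close> by simp
      show ?thesis using a b c p1(2) by linarith
    qed
    ultimately show ?thesis by blast
  qed
qed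

theorem corollary2:
  fixes V :: "'a set" and E :: "'a \<Rightarrow> 'a \<Rightarrow> bool" and r u :: 'a and X :: "'a set"
  assumes "finite V" and "card V \<ge> 2"
    and "\<forall>a b. E a b \<longrightarrow> a \<in> V \<and> b \<in> V"
    and "\<forall>a. \<not> E a a"
    and "r \<in> V"
    and "\<forall>v \<in> V. reachable V E r v"
    and "u \<in> V"
    and "X \<subseteq> V - ({v. cut_tree_node E V r v} \<union> {u})"
  shows "\<exists>p. dpath_from_to V E r u p \<and> real (card (set p \<inter> X)) \<le> real (card X) / 2"
proof -
  have tn: "\<forall>v. cut_tree_node E V r v \<longrightarrow> v \<notin> X" using assms(8) by auto
  have uX: "u \<notin> X" using assms(8) by auto
  from main[OF assms(1) assms(5) assms(6) assms(7) uX tn] obtain w where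
    w: "w \<noteq> []" "successively E w" "set w \<subseteq> V" "hd w = r" "last w = u"
       "2 * card (set w \<inter> X) \<le> card (X \<inter> V)" by blast
  from walk_dpath[OF w(1-3)] obtain p where p: "dpath_from_to V E r u p" "set p \<subseteq> set w"
    using w(4,5) by auto
  have cm: "card (set p \<inter> X) \<le> card (set w \<inter> X)" using p(2) by (intro card_mono) auto
  have "X \<inter> V = X" using assms(8) by auto
  moreover have "2 * card (set w \<inter> X) \<le> card X" using w(6) \<open>X \<inter> V = X\<close> by simp
  ultimately have "2 * card (set p \<inter> X) \<le> card X" using cm by linarith
  then have "real (card (set p \<inter> X)) \<le> real (card X) / 2" by linarith
  then show ?thesis using p(1) by blast
qed


end
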